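(* Every superset-closed adversary $\mathcal A\subseteq 2^\Pi$ is fair, i.e. for all $P\subseteq\Pi$ and $Q\subseteq P$, $\mathit{setcon}(\mathcal A|_{P,Q})=\min(|Q|,\mathit{setcon}(\mathcal A|_P))$.
   Context: An adversary is a set $\mathcal A\subseteq 2^\Pi$ of subsets (live sets) of the process set $\Pi=\{p_1,\dots,p_n\}$. It is superset-closed if $S\in\mathcal A$, $S\subseteq S'\subseteq\Pi$ imply $S'\in\mathcal A$. $\mathcal A|_P=\{S\in\mathcal A: S\subseteq P\}$ and $\mathcal A|_{P,Q}=\{S\in\mathcal A|_P: S\cap Q\neq\emptyset\}$. The set consensus power is defined recursively by $\mathit{setcon}(\emptyset)=0$ and, for $\mathcal A\ne\emptyset$, $\mathit{setcon}(\mathcal A)=\max_{S\in\mathcal A}\min_{a\in S}\mathit{setcon}(\mathcal A|_{S\setminus\{a\}})+1$. $\mathcal A$ is fair if for all $P\subseteq\Pi$ and $Q\subseteq P$, $\mathit{setcon}(\mathcal A|_{P,Q})=\min(|Q|,\mathit{setcon}(\mathcal A|_P))$. (Known fact usable: for superset-closed $\mathcal A$, $\mathit{setcon}(\mathcal A)$ equals the minimum size of a hitting set of $\mathcal A$, i.e. a subset of $\Pi$ meeting every live set.) *)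

theory Defs
  imports Main
begin

text \<open>An adversary over process set Pi is a family of live sets (subsets of Pi).\<close>

definition restr :: "'a set set \<Rightarrow> 'a set \<Rightarrow> 'a set set" where
  "restr A P = {S \<in> A. S \<subseteq> P}"

definition restr2 :: "'a set set \<Rightarrow> 'a set \<Rightarrow> 'a set \<Rightarrow> 'a set set" where
  "restr2 A P Q = {S \<in> restr A P. S \<inter> Q \<noteq> {}}"

definition superset_closed :: "'a set \<Rightarrow> 'a set set \<Rightarrow> bool" where
  "superset_closed Pi A \<longleftrightarrow> (\<forall>S S'. S \<in> A \<and> S \<subseteq> S' \<and> S' \<subseteq> Pi \<longrightarrow> S' \<in> A)"

text \<open>Set consensus power. The guard on finiteness only ensures totality; adversaries
  over a finite process set are always finite.\<close>
function setcon :: "'a set set \<Rightarrow> nat" where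
  "setcon A = (if A = {} \<or> infinite (\<Union>A) then 0
     else Max ((\<lambda>S. Min ((\<lambda>a. setcon (restr A (S - {a}))) ` S) + 1) ` A))"
  by auto
termination
proof (relation "measure (\<lambda>A. card (\<Union>A))")
  show "wf (measure (\<lambda>A. card (\<Union>A)))" by simp
next
  fix A :: "'a set set" and S a
  assume h: "\<not> (A = {} \<or> infinite (\<Union>A))" "S \<in> A" "a \<in> S"
  have "\<Union>(restr A (S - {a})) \<subseteq> S - {a}" by (auto simp: restr_def)
  also have "\<dots> \<subset> \<Union>A" using h by blast
  finally have "\<Union>(restr A (S - {a})) \<subset> \<Union>A" .
  then show "(restr A (S - {a}), A) \<in> measure (\<lambda>A. card (\<Union>A))"
    using h by (simp add: psubset_card_mono)
qed

definition fair :: "'a set \<Rightarrow> 'a set set \<Rightarrow> bool" where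
  "fair Pi A \<longleftrightarrow> (\<forall>P Q. P \<subseteq> Pi \<and> Q \<subseteq> P \<longrightarrow>
      setcon (restr2 A P Q) = min (card Q) (setcon (restr A P)))"

end

theory Submission
  imports Defs
begin

declare setcon.simps[simp del]

definition hits :: "'a set set \<Rightarrow> 'a set \<Rightarrow> bool" where
  "hits B H \<longleftrightarrow> (\<forall>S\<in>B. S \<inter> H \<noteq> {})"

definition hn :: "'a set set \<Rightarrow> nat" where
  "hn B = (LEAST k. \<exists>H. finite H \<and> card H = k \<and> hits B H)"

definition sc :: "'a set \<Rightarrow> 'a set set \<Rightarrow> bool" where
  "sc P B \<longleftrightarrow> B \<subseteq> Pow P \<and> {} \<notin> B \<and> (\<forall>S S'. S \<in> B \<and> S \<subseteq> S' \<and> S' \<subseteq> P \<longrightarrow> S' \<in> B)"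

lemma hn_le: "finite H \<Longrightarrow> hits B H \<Longrightarrow> hn B \<le> card H"
  unfolding hn_def by (rule Least_le) blast

lemma hn_ex: "sc P B \<Longrightarrow> finite P \<Longrightarrow> \<exists>H. finite H \<and> card H = hn B \<and> hits B H"
proof -
  assume a: "sc P B" "finite P"
  have "hits B P" using a unfolding sc_def hits_def by blast
  then have "\<exists>k H. finite H \<and> card H = k \<and> hits B H" using a by blast
  then show ?thesis unfolding hn_def by (rule LeastI_ex)
qed

lemma sc_restr: "sc P B \<Longrightarrow> P' \<subseteq> P \<Longrightarrow> sc P' (restr B P')"
  unfolding sc_def restr_def by (auto, meson order_trans)

lemma main: "finite P \<Longrightarrow> sc P B \<Longrightarrow> setcon B = hn B"
proof (induction "card P" arbitrary: P B rule: less_induct)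
  case less
  show ?case
  proof (cases "B = {}")
    case True
    have "hn B \<le> card ({}::'a set)" by (rule hn_le) (auto simp: hits_def True)
    then show ?thesis using True by (subst setcon.simps) simp
  next
    case False
    have BP: "B \<subseteq> Pow P" and ne: "{} \<notin> B" and up: "\<And>S S'. S \<in> B \<Longrightarrow> S \<subseteq> S' \<Longrightarrow> S' \<subseteq> P \<Longrightarrow> S' \<in> B"
      using less.prems unfolding sc_def by blast+
    have fin: "finite (\<Union>B)" proof -
      have "\<Union>B \<subseteq> P" using BP by blast
      then show ?thesis using less.prems(1) finite_subset by blast
    qed
    have finB: "finite B" using finite_subset[OF BP] less.prems(1) by simp
    have IH: "setcon (restr B (S-{a})) = hn (restr B (S-{a}))" if "S \<in> B" "a \<in> S" for S a
    proof -
      have "S \<subseteq> P" using that BP by blast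
      then have "S - {a} \<subset> P" using that by blast
      then have "card (S - {a}) < card P" using less.prems(1) by (simp add: psubset_card_mono)
      moreover have "sc (S-{a}) (restr B (S-{a}))" using less.prems(2) \<open>S - {a} \<subset> P\<close> sc_restr by blast
      moreover have "finite (S - {a})" using \<open>S - {a} \<subset> P\<close> less.prems(1) finite_subset by blast
      ultimately show ?thesis using less.hyps by blast
    qed
    have eq: "setcon B = Max ((\<lambda>S. Min ((\<lambda>a. hn (restr B (S-{a}))) ` S) + 1) ` B)"
    proof -
      have "setcon B = Max ((\<lambda>S. Min ((\<lambda>a. setcon (restr B (S-{a}))) ` S) + 1) ` B)"
        using False fin by (subst setcon.simps) simp
      also have "\<dots> = Max ((\<lambda>S. Min ((\<lambda>a. hn (restr B (S-{a}))) ` S) + 1) ` B)"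
        using IH by (intro arg_cong[where f=Max] image_cong refl arg_cong[where f="\<lambda>x. Min x + 1"]) simp
      finally show ?thesis .
    qed
    obtain H where H: "finite H" "card H = hn B" "hits B H" using hn_ex less.prems by blast
    have PB: "P \<in> B" using False up BP by blast
    have finS: "finite S" if "S \<in> B" for S using that BP less.prems(1) finite_subset by blast
    have upper: "Max ((\<lambda>S. Min ((\<lambda>a. hn (restr B (S-{a}))) ` S) + 1) ` B) \<le> hn B"
    proof (subst Max_le_iff)
      show "finite ((\<lambda>S. Min ((\<lambda>a. hn (restr B (S-{a}))) ` S) + 1) ` B)" using finB by simp
      show "(\<lambda>S. Min ((\<lambda>a. hn (restr B (S-{a}))) ` S) + 1) ` B \<noteq> {}" using False by simp
      show "\<forall>x\<in>(\<lambda>S. Min ((\<lambda>a. hn (restr B (S-{a}))) ` S) + 1) ` B. x \<le> hn B"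
      proof
        fix x assume "x \<in> (\<lambda>S. Min ((\<lambda>a. hn (restr B (S-{a}))) ` S) + 1) ` B"
        then obtain S where S: "S \<in> B" "x = Min ((\<lambda>a. hn (restr B (S-{a}))) ` S) + 1" by blast
        obtain a where a: "a \<in> S" "a \<in> H" using H(3) S(1) unfolding hits_def by blast
        have "Min ((\<lambda>a. hn (restr B (S-{a}))) ` S) \<le> hn (restr B (S-{a}))"
          using finS[OF S(1)] a by simp
        also have "\<dots> \<le> card (H - {a})"
          by (rule hn_le) (use H a in \<open>auto simp: hits_def restr_def\<close>)
        also have "\<dots> = hn B - 1" using H a by simp
        finally have "Min ((\<lambda>a. hn (restr B (S-{a}))) ` S) \<le> hn B - 1" .
        moreover have "hn B \<ge> 1" using H a by (metis One_nat_def Suc_leI card_gt_0_iff empty_iff)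
        ultimately show "x \<le> hn B" using S by linarith
      qed
    qed
    have Pne: "P \<noteq> {}" using PB ne by blast
    obtain a where a: "a \<in> P" "Min ((\<lambda>a. hn (restr B (P-{a}))) ` P) = hn (restr B (P-{a}))"
    proof -
      have "Min ((\<lambda>a. hn (restr B (P-{a}))) ` P) \<in> (\<lambda>a. hn (restr B (P-{a}))) ` P"
        using less.prems(1) Pne by (intro Min_in) auto
      then show ?thesis using that by auto
    qed
    obtain H' where H': "finite H'" "card H' = hn (restr B (P-{a}))" "hits (restr B (P-{a})) H'"
      using hn_ex[of "P-{a}" "restr B (P-{a})"] sc_restr[OF less.prems(2), of "P-{a}"] less.prems(1) by auto
    have "hn B \<le> card (insert a H')"
    proof (rule hn_le)
      show "finite (insert a H')" using H' by simp
      show "hits B (insert a H')" unfolding hits_def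
      proof
        fix T assume T: "T \<in> B"
        show "T \<inter> insert a H' \<noteq> {}"
        proof (cases "a \<in> T")
          case True then show ?thesis by blast
        next
          case False
          then have "T \<in> restr B (P-{a})" using T BP by (auto simp: restr_def)
          then show ?thesis using H'(3) unfolding hits_def by blast
        qed
      qed
    qed
    also have "\<dots> \<le> hn (restr B (P-{a})) + 1" using H' by (simp add: card_insert_if)
    also have "\<dots> \<le> Max ((\<lambda>S. Min ((\<lambda>a. hn (restr B (S-{a}))) ` S) + 1) ` B)"
      using a PB finB by (intro Max_ge) (auto intro!: image_eqI[where x=P])
    finally show ?thesis using eq upper by simp
  qed
qed

theorem theorem5:
  fixes Pi :: "'a set" and A :: "'a set set"
  assumes "finite Pi"
    and "A \<subseteq> Pow Pi"
    and "{} \<notin> A"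
    and "superset_closed Pi A"
  shows "fair Pi A"
  unfolding fair_def
proof (intro allI impI, elim conjE)
  fix P Q assume PPi: "P \<subseteq> Pi" and QP: "Q \<subseteq> P"
  have finP: "finite P" using PPi assms(1) finite_subset by blast
  have finQ: "finite Q" using QP finP finite_subset by blast
  define B where "B = restr A P"
  define C where "C = restr2 A P Q"
  have up: "S' \<in> A" if "S \<in> A" "S \<subseteq> S'" "S' \<subseteq> P" for S S'
    using assms(4) that PPi unfolding superset_closed_def by (meson order_trans)
  have scB: "sc P B" using assms(3) up unfolding B_def sc_def restr_def by auto
  have scC: "sc P C" using assms(3) up unfolding C_def sc_def restr2_def restr_def by fastforce
  have CB: "C \<subseteq> B" unfolding B_def C_def restr2_def by blast
  have eB: "setcon B = hn B" by (rule main[OF finP scB])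
  have eC: "setcon C = hn C" by (rule main[OF finP scC])
  obtain HB where HB: "finite HB" "card HB = hn B" "hits B HB" using hn_ex[OF scB finP] by blast
  obtain H where H: "finite H" "card H = hn C" "hits C H" using hn_ex[OF scC finP] by blast
  have le1: "hn C \<le> card Q" by (rule hn_le[OF finQ]) (auto simp: hits_def C_def restr2_def)
  have le2: "hn C \<le> hn B" using hn_le[OF HB(1), of C] HB CB unfolding hits_def by auto
  have ge: "min (card Q) (hn B) \<le> hn C"
  proof (rule ccontr)
    assume "\<not> ?thesis"
    then have c1: "card H < card Q" and c2: "card H < hn B" using H by auto
    have "\<not> hits B H" using hn_le[OF H(1), of B] c2 by auto
    then obtain S where S: "S \<in> B" "S \<inter> H = {}" unfolding hits_def by blast
    have "\<not> Q \<subseteq> H" using c1 card_mono[OF H(1)] by (meson leD)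
    then obtain q where q: "q \<in> Q" "q \<notin> H" by blast
    have "S \<subseteq> P - H" using S unfolding B_def restr_def by blast
    moreover have "S \<in> A" using S unfolding B_def restr_def by blast
    ultimately have "P - H \<in> A" using up by blast
    then have "P - H \<in> C" using q QP unfolding C_def restr2_def restr_def by blast
    then show False using H(3) unfolding hits_def by blast
  qed
  show "setcon (restr2 A P Q) = min (card Q) (setcon (restr A P))"
    using eB eC le1 le2 ge unfolding B_def C_def by linarith
qed

end
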